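(* Let $\mathbb F$ have characteristic $0$ and let $f(\mathbf x)\in\mathbb F^k[\mathbf x]$ be an arity-$n$ polynomial of degree $d$ with coefficients in $\mathbb F^k$. Let $\mathbf w\in\mathbb N^n$ be a basis isolating weight assignment for $f$. Then $f(\mathbf x+t^{\mathbf w}):=f(x_1+t^{w_1},\dots,x_n+t^{w_n})$, viewed as a polynomial in $\mathbf x$ with coefficients in $\mathbb F(t)^k$, has a cone-closed basis over $\mathbb F(t)$.
   Context: For $f\in\mathbb F^k[\mathbf x]$, $\mathrm{coef}_{\mathbf x^{\mathbf e}}(f)\in\mathbb F^k$ is the coefficient vector of monomial $\mathbf x^{\mathbf e}$, and $\mathrm{lrsp}(f)$ is the span of all coefficient vectors. A monomial $\mathbf x^{\mathbf e}$ is a submonomial of $\mathbf x^{\mathbf f}$ if $\mathbf e\le\mathbf f$ coordinatewise; a set of monomials is cone-closed if it contains every submonomial of each of its elements. $f$ has a cone-closed basis if there is a cone-closed set $B$ of monomials whose coefficients form a basis of $\mathrm{lrsp}(f)$. A weight assignment $\mathbf w\in\mathbb N^n$ gives monomial $\mathbf x^{\mathbf e}$ weight $\mathbf w(\mathbf e)=\sum_i e_iw_i$. $\mathbf w$ is basis isolating for $f$ if there is a set of monomials $B$ whose coefficients form a basis of $\mathrm{lrsp}(f)$ such that (1) the monomials in $B$ have pairwise distinct weights, and (2) for every monomial $m$ in the support of $f$ not in $B$, $\mathrm{coef}_m(f)$ lies in the span of $\{\mathrm{coef}_{m'}(f): m'\in B,\ \mathbf w(m')<\mathbf w(m)\}$.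 *)

theory Defs
  imports Main "HOL-Library.Function_Algebras" "HOL-Library.Poly_Mapping" "HOL-Computational_Algebra.Polynomial"
    "HOL-Computational_Algebra.Fraction_Field"
begin

text \<open>An arity-n polynomial with coefficients in F^k: variables indexed by a finite
  type 'n (so n = CARD('n)), coefficient vectors are functions 'k \<Rightarrow> F with 'k finite
  (k = CARD('k)). We represent f in F^k[x] componentwise: f j is the scalar polynomial
  (a finitely supported map from exponent vectors to F) giving the j-th coordinate.\<close>

type_synonym ('n, 'b) mpoly = "('n \<Rightarrow>\<^sub>0 nat) \<Rightarrow>\<^sub>0 'b"
type_synonym ('k, 'n, 'b) vpoly = "'k \<Rightarrow> ('n, 'b) mpoly"

definition vscale :: "'b::field \<Rightarrow> ('k \<Rightarrow> 'b) \<Rightarrow> ('k \<Rightarrow> 'b)" where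
  "vscale c v = (\<lambda>j. c * v j)"

definition coefv :: "('k, 'n, 'b::zero) vpoly \<Rightarrow> ('n \<Rightarrow>\<^sub>0 nat) \<Rightarrow> ('k \<Rightarrow> 'b)" where
  "coefv f e = (\<lambda>j. Poly_Mapping.lookup (f j) e)"

definition vsupp :: "('k, 'n, 'b::zero) vpoly \<Rightarrow> ('n \<Rightarrow>\<^sub>0 nat) set" where
  "vsupp f = {e. coefv f e \<noteq> (\<lambda>_. 0)}"

definition lrsp :: "('k, 'n, 'b::field) vpoly \<Rightarrow> ('k \<Rightarrow> 'b) set" where
  "lrsp f = module.span vscale (range (coefv f))"

definition coef_basis :: "('k, 'n, 'b::field) vpoly \<Rightarrow> ('n \<Rightarrow>\<^sub>0 nat) set \<Rightarrow> bool" where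
  "coef_basis f B \<longleftrightarrow> inj_on (coefv f) B \<and> \<not> module.dependent vscale (coefv f ` B)
      \<and> module.span vscale (coefv f ` B) = lrsp f"

definition submonomial :: "('n \<Rightarrow>\<^sub>0 nat) \<Rightarrow> ('n \<Rightarrow>\<^sub>0 nat) \<Rightarrow> bool" where
  "submonomial e m \<longleftrightarrow> (\<forall>i. Poly_Mapping.lookup e i \<le> Poly_Mapping.lookup m i)"

definition cone_closed :: "('n \<Rightarrow>\<^sub>0 nat) set \<Rightarrow> bool" where
  "cone_closed B \<longleftrightarrow> (\<forall>m\<in>B. \<forall>e. submonomial e m \<longrightarrow> e \<in> B)"

definition has_cone_closed_basis :: "('k, 'n, 'b::field) vpoly \<Rightarrow> bool" where
  "has_cone_closed_basis f \<longleftrightarrow> (\<exists>B. cone_closed B \<and> coef_basis f B)"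

definition weight :: "('n::finite \<Rightarrow> nat) \<Rightarrow> ('n \<Rightarrow>\<^sub>0 nat) \<Rightarrow> nat" where
  "weight w e = (\<Sum>i\<in>UNIV. Poly_Mapping.lookup e i * w i)"

definition basis_isolating :: "('n::finite \<Rightarrow> nat) \<Rightarrow> ('k, 'n, 'b::field) vpoly \<Rightarrow> bool" where
  "basis_isolating w f \<longleftrightarrow> (\<exists>B. coef_basis f B \<and> inj_on (weight w) B \<and>
      (\<forall>m \<in> vsupp f - B.
         coefv f m \<in> module.span vscale (coefv f ` {m'\<in>B. weight w m' < weight w m})))"

definition mvar :: "'n \<Rightarrow> ('n, 'b::comm_semiring_1) mpoly" where
  "mvar i = Poly_Mapping.single (Poly_Mapping.single i 1) 1"

definition mconst :: "'b::zero \<Rightarrow> ('n, 'b) mpoly" where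
  "mconst c = Poly_Mapping.single 0 c"

definition t_var :: "'a::field poly fract" where
  "t_var = Fract [:0, 1:] 1"

definition emb :: "'a::field \<Rightarrow> 'a poly fract" where
  "emb c = Fract [:c:] 1"

definition shift_scalar :: "('n::finite \<Rightarrow> nat) \<Rightarrow> ('n, 'a::field) mpoly \<Rightarrow> ('n, 'a poly fract) mpoly" where
  "shift_scalar w p = (\<Sum>m\<in>Poly_Mapping.keys p. mconst (emb (Poly_Mapping.lookup p m)) *
      (\<Prod>i\<in>UNIV. (mvar i + mconst (t_var ^ w i)) ^ Poly_Mapping.lookup m i))"

definition shift_poly :: "('n::finite \<Rightarrow> nat) \<Rightarrow> ('k, 'n, 'a::field) vpoly \<Rightarrow> ('k, 'n, 'a poly fract) vpoly" where
  "shift_poly w f = (\<lambda>j. shift_scalar w (f j))"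

end

theory Submission
  imports Defs "HOL-Library.FuncSet" "HOL-Library.Multiset_Order"
begin

lemma mvar_power: "(mvar i :: ('n, 'b::comm_semiring_1) mpoly) ^ j = Poly_Mapping.single (Poly_Mapping.single i j) 1"
proof (induction j)
  case 0 then show ?case by simp
next
  case (Suc j)
  have "Poly_Mapping.single i (Suc j) = Poly_Mapping.single i 1 + Poly_Mapping.single i j"
    by (simp add: single_add[symmetric])
  then show ?case using Suc by (simp add: mvar_def mult_single)
qed
lemma mconst_power: "(mconst c :: ('n, 'b::comm_semiring_1) mpoly) ^ j = mconst (c ^ j)"
  by (induction j) (simp_all add: mconst_def mult_single)

lemma binom_mvar:
  "(mvar i + mconst c :: ('n, 'b::comm_semiring_1) mpoly) ^ a =
    (\<Sum>j\<le>a. Poly_Mapping.single (Poly_Mapping.single i j) (of_nat (a choose j) * c ^ (a - j)))"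
proof -
  have "(mvar i + mconst c :: ('n, 'b::comm_semiring_1) mpoly) ^ a = (\<Sum>j\<le>a. of_nat (a choose j) * mvar i ^ j * mconst c ^ (a - j))"
    by (rule binomial_ring)
  also have "\<dots> = (\<Sum>j\<le>a. Poly_Mapping.single (Poly_Mapping.single i j) (of_nat (a choose j) * c ^ (a - j)))"
  proof (rule sum.cong[OF refl])
    fix j
    have "(of_nat (a choose j) :: ('n, 'b) mpoly) = Poly_Mapping.single 0 (of_nat (a choose j))"
      by simp
    then show "of_nat (a choose j) * mvar i ^ j * mconst c ^ (a - j) = (Poly_Mapping.single (Poly_Mapping.single i j) (of_nat (a choose j) * c ^ (a - j)) :: ('n, 'b) mpoly)"
      unfolding mvar_power mconst_power by (simp only: mconst_def mult_single) simp
  qed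
  finally show ?thesis .
qed

lemma prod_single_pm:
  "finite A \<Longrightarrow> (\<Prod>i\<in>A. Poly_Mapping.single (s i) (d i) :: ('x::comm_monoid_add, 'b::comm_semiring_1) poly_mapping)
     = Poly_Mapping.single (\<Sum>i\<in>A. s i) (\<Prod>i\<in>A. d i)"
  by (induction A rule: finite_induct) (simp_all add: mult_single)

lemma lookup_sum_single_fun:
  "Poly_Mapping.lookup (\<Sum>i\<in>(UNIV::'n::finite set). Poly_Mapping.single i (\<phi> i)) = \<phi>"
proof
  fix j show "Poly_Mapping.lookup (\<Sum>i\<in>(UNIV::'n::finite set). Poly_Mapping.single i (\<phi> i)) j = \<phi> j"
    by (simp add: lookup_sum lookup_single when_def)
qed

lemma lookup_prod_shift:
  fixes c :: "'n::finite \<Rightarrow> 'b::comm_semiring_1"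
  shows "Poly_Mapping.lookup (\<Prod>i\<in>UNIV. (mvar i + mconst (c i)) ^ m i) e =
    (\<Prod>i\<in>UNIV. of_nat (m i choose Poly_Mapping.lookup e i) * c i ^ (m i - Poly_Mapping.lookup e i))"
proof -
  let ?d = "\<lambda>i j. of_nat (m i choose j) * c i ^ (m i - j)"
  have "(\<Prod>i\<in>UNIV. (mvar i + mconst (c i)) ^ m i) =
      (\<Sum>g\<in>PiE UNIV (\<lambda>i. {..m i}). \<Prod>i\<in>UNIV. Poly_Mapping.single (Poly_Mapping.single i (g i)) (?d i (g i)))"
    unfolding binom_mvar by (rule prod_sum_PiE) auto
  also have "\<dots> = (\<Sum>g\<in>PiE UNIV (\<lambda>i. {..m i}). Poly_Mapping.single (\<Sum>i\<in>UNIV. Poly_Mapping.single i (g i)) (\<Prod>i\<in>UNIV. ?d i (g i)))"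
    by (simp add: prod_single_pm)
  finally have eq: "(\<Prod>i\<in>UNIV. (mvar i + mconst (c i)) ^ m i) = \<dots>" .
  have inj: "(\<Sum>i\<in>UNIV. Poly_Mapping.single i (g i)) = e \<longleftrightarrow> g = Poly_Mapping.lookup e" for g
    by (metis lookup_sum_single_fun Poly_Mapping.lookup_inject)
  have "Poly_Mapping.lookup (\<Prod>i\<in>UNIV. (mvar i + mconst (c i)) ^ m i) e =
     (\<Sum>g\<in>PiE UNIV (\<lambda>i. {..m i}). if g = Poly_Mapping.lookup e then (\<Prod>i\<in>UNIV. ?d i (g i)) else 0)"
    unfolding eq lookup_sum lookup_single by (intro sum.cong refl) (auto simp: when_def inj)
  also have "\<dots> = (if Poly_Mapping.lookup e \<in> PiE UNIV (\<lambda>i. {..m i}) then (\<Prod>i\<in>UNIV. ?d i (Poly_Mapping.lookup e i)) else 0)"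
    by (simp add: sum.delta' finite_PiE)
  also have "\<dots> = (\<Prod>i\<in>UNIV. ?d i (Poly_Mapping.lookup e i))"
  proof (cases "Poly_Mapping.lookup e \<in> PiE UNIV (\<lambda>i. {..m i})")
    case False
    then obtain i where "Poly_Mapping.lookup e i > m i" by (auto simp: PiE_def Pi_def not_le)
    then have "?d i (Poly_Mapping.lookup e i) = 0" by (simp add: binomial_eq_0)
    then have "(\<Prod>i\<in>UNIV. ?d i (Poly_Mapping.lookup e i)) = 0"
      by (intro prod_zero) auto
    then show ?thesis using False by simp
  qed simp
  finally show ?thesis .
qed

global_interpretation vs: vector_space "vscale :: 'b::field \<Rightarrow> ('c \<Rightarrow> 'b) \<Rightarrow> ('c \<Rightarrow> 'b)"
  by unfold_locales (auto simp: vscale_def algebra_simps fun_eq_iff)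

lemma vscale_apply[simp]: "vscale c v j = c * v j"
  by (simp add: vscale_def)

lemma sum_fun_apply: "(\<Sum>a\<in>A. g a) j = (\<Sum>a\<in>A. g a j)"
  by (induction A rule: infinite_finite_induct) auto

lemma sum_vscale_apply: "(\<Sum>a\<in>A. vscale (u a) (v a)) j = (\<Sum>a\<in>A. u a * v a j)"
  by (simp add: sum_fun_apply)

lemma famindep_D:
  fixes v :: "'i \<Rightarrow> 'c \<Rightarrow> 'b::field"
  assumes fin: "finite A" and inj: "inj_on v A" and ind: "\<not> vs.dependent (v ` A)"
    and z: "\<And>j. (\<Sum>a\<in>A. u a * v a j) = 0" and a: "a \<in> A"
  shows "u a = 0"
proof -
  define U where "U y = u (the_inv_into A v y)" for y
  have "(\<Sum>y\<in>v ` A. vscale (U y) y) = (\<Sum>a\<in>A. vscale (U (v a)) (v a))"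
    by (rule sum.reindex[OF inj, unfolded comp_def])
  also have "\<dots> = (\<Sum>a\<in>A. vscale (u a) (v a))"
    by (intro sum.cong refl) (simp add: U_def the_inv_into_f_f[OF inj])
  also have "\<dots> = 0" by (rule ext) (simp add: sum_vscale_apply z)
  finally have "(\<Sum>y\<in>v ` A. vscale (U y) y) = 0" .
  with ind vs.dependent_finite[of "v ` A"] fin have "\<forall>y\<in>v ` A. U y = 0" by auto
  then have "U (v a) = 0" using a by auto
  then show ?thesis by (simp add: U_def the_inv_into_f_f[OF inj a])
qed

lemma famindep_I:
  fixes v :: "'i \<Rightarrow> 'c \<Rightarrow> 'b::field"
  assumes fin: "finite A"
    and H: "\<And>u. (\<And>j. (\<Sum>a\<in>A. u a * v a j) = 0) \<Longrightarrow> (\<forall>a\<in>A. u a = 0)"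
  shows "inj_on v A \<and> \<not> vs.dependent (v ` A)"
proof
  show inj: "inj_on v A"
  proof (rule inj_onI, rule ccontr)
    fix a a' assume aa: "a \<in> A" "a' \<in> A" "v a = v a'" "a \<noteq> a'"
    define u where "u x = (if x = a then 1 else if x = a' then -1 else (0::'b))" for x
    have "(\<Sum>x\<in>A. u x * v x j) = 0" for j
    proof -
      have "(\<Sum>x\<in>A. u x * v x j) = (\<Sum>x\<in>A. (if x = a then v a j else 0) + (if x = a' then - v a' j else 0))"
        by (intro sum.cong refl) (simp add: u_def aa(4) aa(4)[symmetric])
      also have "\<dots> = (\<Sum>x\<in>A. (if x = a then v a j else 0)) + (\<Sum>x\<in>A. (if x = a' then - v a' j else 0))"
        by (rule sum.distrib)
      also have "\<dots> = v a j - v a' j" using aa(1,2) fin by simp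
      finally show ?thesis using aa(3) by simp
    qed
    then have "u a = 0" using H aa(1) by blast
    then show False by (simp add: u_def)
  qed
  show "\<not> vs.dependent (v ` A)"
  proof
    assume "vs.dependent (v ` A)"
    then obtain U where U: "\<exists>y\<in>v ` A. U y \<noteq> 0" "(\<Sum>y\<in>v ` A. vscale (U y) y) = 0"
      using vs.dependent_finite[of "v ` A"] fin by auto
    have "(\<Sum>a\<in>A. vscale (U (v a)) (v a)) = 0"
      using U(2) sum.reindex[OF inj, of "\<lambda>y. vscale (U y) y"] by (simp add: comp_def)
    have "(\<Sum>a\<in>A. U (v a) * v a j) = 0" for j
    proof -
      have "(\<Sum>a\<in>A. vscale (U (v a)) (v a)) j = 0" using \<open>(\<Sum>a\<in>A. vscale (U (v a)) (v a)) = 0\<close> by simp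
      then show ?thesis by (simp only: sum_vscale_apply)
    qed
    then have "\<forall>a\<in>A. U (v a) = 0" by (rule H)
    with U(1) show False by auto
  qed
qed

definition bin :: "('n::finite \<Rightarrow>\<^sub>0 nat) \<Rightarrow> ('n \<Rightarrow>\<^sub>0 nat) \<Rightarrow> nat" where
  "bin b e = (\<Prod>i\<in>UNIV. Poly_Mapping.lookup b i choose Poly_Mapping.lookup e i)"

lemma bin_self: "bin b b = 1"
  by (simp add: bin_def)

lemma bin_nz: "bin b e \<noteq> 0 \<longleftrightarrow> submonomial e b"
  by (simp add: bin_def submonomial_def binomial_eq_0_iff not_less)

lemma choose_step_nat: "Suc k * (n choose Suc k) = (n - k) * (n choose k)"
  by (metis binomial_absorption binomial_absorb_comp)

lemma choose_step:
  "(of_nat (Suc k) * of_nat (n choose Suc k) :: 'a::comm_ring_1) = (of_nat n - of_nat k) * of_nat (n choose k)"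
proof (cases "k \<le> n")
  case True
  have "(of_nat (Suc k) * of_nat (n choose Suc k) :: 'a) = of_nat (Suc k * (n choose Suc k))"
    by (simp only: of_nat_mult)
  also have "\<dots> = of_nat ((n - k) * (n choose k))"
    by (simp only: choose_step_nat)
  also have "\<dots> = (of_nat n - of_nat k) * of_nat (n choose k)" using True by (simp add: of_nat_diff)
  finally show ?thesis .
next
  case False then show ?thesis by (simp add: binomial_eq_0)
qed

lemma lookup_add_single: "Poly_Mapping.lookup (e + Poly_Mapping.single i 1) j = Poly_Mapping.lookup e j + (if i = j then 1 else 0)"
  by (simp add: lookup_add lookup_single when_def)

lemma bin_step:
  fixes b e :: "'n::finite \<Rightarrow>\<^sub>0 nat"
  shows "(of_nat (Suc (Poly_Mapping.lookup e i)) * of_nat (bin b (e + Poly_Mapping.single i 1)) :: 'a::comm_ring_1)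
    = (of_nat (Poly_Mapping.lookup b i) - of_nat (Poly_Mapping.lookup e i)) * of_nat (bin b e)"
proof -
  let ?R = "\<Prod>j\<in>UNIV - {i}. Poly_Mapping.lookup b j choose Poly_Mapping.lookup e j"
  have R: "(\<Prod>j\<in>UNIV - {i}. Poly_Mapping.lookup b j choose Poly_Mapping.lookup (e + Poly_Mapping.single i 1) j) = ?R"
    by (intro prod.cong refl) (simp add: lookup_add lookup_single when_def)
  have li: "Poly_Mapping.lookup (e + Poly_Mapping.single i 1) i = Suc (Poly_Mapping.lookup e i)"
    by (simp add: lookup_add lookup_single)
  have 1: "bin b (e + Poly_Mapping.single i 1) = (Poly_Mapping.lookup b i choose Suc (Poly_Mapping.lookup e i)) * ?R"
    unfolding bin_def using prod.remove[of UNIV i "\<lambda>j. Poly_Mapping.lookup b j choose Poly_Mapping.lookup (e + Poly_Mapping.single i 1) j"] li R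
    by simp
  have 2: "bin b e = (Poly_Mapping.lookup b i choose Poly_Mapping.lookup e i) * ?R"
    unfolding bin_def by (subst prod.remove[of _ i]) simp_all
  show ?thesis unfolding 1 2 of_nat_mult
    using choose_step[of "Poly_Mapping.lookup e i" "Poly_Mapping.lookup b i", where 'a='a]
    by (simp add: mult.assoc[symmetric])
qed

definition iota :: "'n::finite \<Rightarrow> nat" where "iota = (SOME f. inj f)"

lemma inj_iota: "inj (iota :: 'n::finite \<Rightarrow> nat)"
proof -
  have "\<exists>f :: 'n \<Rightarrow> nat. inj f" using finite_imp_inj_to_nat_seg[of "UNIV :: 'n set"] by auto
  then show ?thesis unfolding iota_def by (rule someI_ex)
qed

definition mo :: "('n::finite \<Rightarrow>\<^sub>0 nat) \<Rightarrow> nat multiset" where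
  "mo e = (\<Sum>i\<in>UNIV. replicate_mset (Poly_Mapping.lookup e i) (iota i))"

lemma count_mo: "count (mo e) (iota i) = Poly_Mapping.lookup e i"
proof -
  have "count (mo e) (iota i) = (\<Sum>j\<in>UNIV. if j = i then Poly_Mapping.lookup e j else 0)"
    unfolding mo_def count_sum by (intro sum.cong refl) (auto simp: inj_eq[OF inj_iota])
  then show ?thesis by simp
qed

lemma inj_mo: "inj mo"
proof (rule injI)
  fix e h :: "'n::finite \<Rightarrow>\<^sub>0 nat" assume "mo e = mo h"
  then have "Poly_Mapping.lookup e i = Poly_Mapping.lookup h i" for i by (metis count_mo)
  then show "e = h" by (simp add: poly_mapping_eqI)
qed

lemma replicate_mset_add: "replicate_mset (a + b) x = replicate_mset a x + replicate_mset b x"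
  by (induction a) auto

lemma mo_add: "mo (e + g) = mo e + mo g"
  unfolding mo_def by (simp add: lookup_add replicate_mset_add sum.distrib)

lemma mo_single: "mo (Poly_Mapping.single i 1) = {#iota i#}"
proof -
  have "mo (Poly_Mapping.single i 1) = (\<Sum>j\<in>UNIV. if j = i then {#iota i#} else {#})"
    unfolding mo_def by (intro sum.cong refl) (simp add: lookup_single when_def)
  then show ?thesis by simp
qed

lemma mo_less_step: "mo e < mo (e + Poly_Mapping.single i 1)"
proof -
  have "mo e + 0 < mo e + {#iota i#}"
    by (intro add_strict_left_mono) simp
  then show ?thesis unfolding mo_add mo_single by simp
qed

lemma mo_less_add: "mo e < mo h \<Longrightarrow> mo (e + g) < mo (h + g)"
  by (simp add: mo_add add_strict_right_mono)

lemma greedy_span: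
  fixes v :: "('n::finite \<Rightarrow>\<^sub>0 nat) \<Rightarrow> 'c \<Rightarrow> 'b::field"
  defines "E \<equiv> {e. v e \<notin> vs.span (v ` {h. mo h < mo e})}"
  shows "v h \<in> vs.span (v ` E)"
proof (induction "mo h" arbitrary: h rule: less_induct)
  case less
  show ?case
  proof (cases "h \<in> E")
    case True then show ?thesis by (intro vs.span_base) auto
  next
    case False
    then have "v h \<in> vs.span (v ` {h'. mo h' < mo h})" by (simp add: E_def)
    moreover have "vs.span (v ` {h'. mo h' < mo h}) \<subseteq> vs.span (v ` E)"
      using less by (intro vs.span_minimal) (auto simp: vs.subspace_span)
    ultimately show ?thesis by auto
  qed
qed

lemma greedy_inj:
  fixes v :: "('n::finite \<Rightarrow>\<^sub>0 nat) \<Rightarrow> 'c \<Rightarrow> 'b::field"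
  defines "E \<equiv> {e. v e \<notin> vs.span (v ` {h. mo h < mo e})}"
  shows "inj_on v E"
proof (rule inj_onI, rule ccontr)
  fix e h assume eh: "e \<in> E" "h \<in> E" "v e = v h" "e \<noteq> h"
  then have "mo e \<noteq> mo h" using inj_mo by (metis injD)
  then have "mo e < mo h \<or> mo h < mo e" by auto
  then show False
  proof
    assume "mo e < mo h"
    then have "v h \<in> vs.span (v ` {h'. mo h' < mo h})" using eh(3) by (intro vs.span_base image_eqI[of _ v e]) auto
    with eh(2) show False by (simp add: E_def)
  next
    assume "mo h < mo e"
    then have "v e \<in> vs.span (v ` {h'. mo h' < mo e})" using eh(3) by (intro vs.span_base image_eqI[of _ v h]) auto
    with eh(1) show False by (simp add: E_def)
  qed
qed

lemma greedy_indep_fin: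
  fixes v :: "('n::finite \<Rightarrow>\<^sub>0 nat) \<Rightarrow> 'c \<Rightarrow> 'b::field"
  defines "E \<equiv> {e. v e \<notin> vs.span (v ` {h. mo h < mo e})}"
  assumes T: "finite T" "T \<subseteq> E" and z: "\<And>j. (\<Sum>e\<in>T. u e * v e j) = 0"
  shows "\<forall>e\<in>T. u e = 0"
proof (rule ccontr)
  assume "\<not> (\<forall>e\<in>T. u e = 0)"
  define T' where "T' = {e\<in>T. u e \<noteq> 0}"
  have T'ne: "T' \<noteq> {}" and T'fin: "finite T'" using \<open>\<not> _\<close> T(1) by (auto simp: T'_def)
  define m0 where "m0 = Max (mo ` T')"
  have "m0 \<in> mo ` T'" unfolding m0_def using T'ne T'fin by (intro Max_in) auto
  then obtain e0 where e0: "e0 \<in> T'" "mo e0 = m0" by auto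
  have lt: "mo e < mo e0" if "e \<in> T' - {e0}" for e
  proof -
    have "mo e \<le> m0" unfolding m0_def using that T'fin by (intro Max_ge) auto
    moreover have "mo e \<noteq> mo e0" using that inj_mo by (metis DiffE injD singletonI)
    ultimately show ?thesis using e0 by auto
  qed
  have z': "(\<Sum>e\<in>T'. u e * v e j) = 0" for j
  proof -
    have "(\<Sum>e\<in>T'. u e * v e j) = (\<Sum>e\<in>T. u e * v e j)"
      using T(1) by (intro sum.mono_neutral_left) (auto simp: T'_def)
    then show ?thesis using z by simp
  qed
  have ue0: "u e0 \<noteq> 0" using e0 by (simp add: T'_def)
  have "v e0 = (\<Sum>e\<in>T' - {e0}. vscale (- u e / u e0) (v e))"
  proof
    fix j
    have "u e0 * v e0 j + (\<Sum>e\<in>T' - {e0}. u e * v e j) = 0"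
      using z'[of j] sum.remove[OF T'fin e0(1), of "\<lambda>e. u e * v e j"] by simp
    then have "v e0 j = - (\<Sum>e\<in>T' - {e0}. u e * v e j) / u e0"
      using ue0 by (simp add: field_simps add_eq_0_iff)
    also have "\<dots> = (\<Sum>e\<in>T' - {e0}. (- u e / u e0) * v e j)"
      by (simp add: sum_divide_distrib sum_negf[symmetric])
    finally show "v e0 j = (\<Sum>e\<in>T' - {e0}. vscale (- u e / u e0) (v e)) j"
      unfolding sum_vscale_apply .
  qed
  also have "\<dots> \<in> vs.span (v ` {h. mo h < mo e0})"
    using lt by (intro vs.span_sum vs.span_scale vs.span_base) auto
  finally have "e0 \<notin> E" by (simp add: E_def)
  with e0(1) T(2) show False by (auto simp: T'_def)
qed

lemma greedy_indep:
  fixes v :: "('n::finite \<Rightarrow>\<^sub>0 nat) \<Rightarrow> 'c \<Rightarrow> 'b::field"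
  defines "E \<equiv> {e. v e \<notin> vs.span (v ` {h. mo h < mo e})}"
  shows "\<not> vs.dependent (v ` E)"
proof
  assume "vs.dependent (v ` E)"
  then obtain t u w where t: "finite t" "t \<subseteq> v ` E" "w \<in> t" "u w \<noteq> 0" "(\<Sum>x\<in>t. vscale (u x) x) = 0"
    unfolding vs.dependent_explicit by blast
  obtain T where T: "T \<subseteq> E" "finite T" "t = v ` T"
    using finite_subset_image[OF t(1,2)] by blast
  have injT: "inj_on v T" using greedy_inj[of v] T(1) unfolding E_def by (rule inj_on_subset)
  have "(\<Sum>e\<in>T. u (v e) * v e j) = 0" for j
  proof -
    have "(\<Sum>x\<in>t. vscale (u x) x) j = 0" using t(5) by simp
    then have "(\<Sum>x\<in>t. u x * x j) = 0" by (simp add: sum_vscale_apply)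
    then show ?thesis unfolding T(3) sum.reindex[OF injT] by (simp add: comp_def)
  qed
  then have "\<forall>e\<in>T. u (v e) = 0"
    apply (intro greedy_indep_fin[of T v "\<lambda>e. u (v e)"])
    using T unfolding E_def by auto
  with t(3,4) T(3) show False by auto
qed

definition row :: "('n::finite \<Rightarrow>\<^sub>0 nat) set \<Rightarrow> ('n \<Rightarrow>\<^sub>0 nat) \<Rightarrow> ('n \<Rightarrow>\<^sub>0 nat) \<Rightarrow> 'a::field_char_0" where
  "row B e = (\<lambda>b. if b \<in> B then of_nat (bin b e) else 0)"

definition Ymul :: "'n \<Rightarrow> (('n \<Rightarrow>\<^sub>0 nat) \<Rightarrow> 'a::field) \<Rightarrow> (('n \<Rightarrow>\<^sub>0 nat) \<Rightarrow> 'a)" where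
  "Ymul i g = (\<lambda>b. of_nat (Poly_Mapping.lookup b i) * g b)"


lemma Ymul_row:
  fixes B :: "('n::finite \<Rightarrow>\<^sub>0 nat) set"
  shows "Ymul i (row B h :: _ \<Rightarrow> 'z::field_char_0) = vscale (of_nat (Suc (Poly_Mapping.lookup h i))) (row B (h + Poly_Mapping.single i 1))
      + vscale (of_nat (Poly_Mapping.lookup h i)) (row B h)"
proof
  fix b
  note H = bin_step[of h i b]
  show "Ymul i (row B h) b = (vscale (of_nat (Suc (Poly_Mapping.lookup h i))) (row B (h + Poly_Mapping.single i 1))
      + vscale (of_nat (Poly_Mapping.lookup h i)) (row B h)) b"
  proof (cases "b \<in> B")
    case True
    have "Ymul i (row B h) b = (of_nat (Poly_Mapping.lookup b i) - of_nat (Poly_Mapping.lookup h i)) * of_nat (bin b h)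
       + of_nat (Poly_Mapping.lookup h i) * of_nat (bin b h)" using True by (simp add: Ymul_def row_def algebra_simps)
    also have "\<dots> = (of_nat (Suc (Poly_Mapping.lookup h i)) * of_nat (bin b (h + Poly_Mapping.single i 1)))
       + of_nat (Poly_Mapping.lookup h i) * of_nat (bin b h)" by (simp only: H)
    also have "\<dots> = (vscale (of_nat (Suc (Poly_Mapping.lookup h i))) (row B (h + Poly_Mapping.single i 1))
      + vscale (of_nat (Poly_Mapping.lookup h i)) (row B h)) b"
      using True by (simp only: row_def plus_fun_apply vscale_apply if_True)
    finally show ?thesis .
  next
    case False then show ?thesis by (simp add: Ymul_def row_def)
  qed
qed

lemma row_step:
  fixes B :: "('n::finite \<Rightarrow>\<^sub>0 nat) set"
  shows "row B (h + Poly_Mapping.single i 1) = vscale (inverse (of_nat (Suc (Poly_Mapping.lookup h i))))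
     (Ymul i (row B h) - vscale (of_nat (Poly_Mapping.lookup h i)) (row B h) :: _ \<Rightarrow> 'a::field_char_0)"
proof -
  have nz: "(of_nat (Suc (Poly_Mapping.lookup h i)) :: 'a) \<noteq> 0" by (rule of_nat_neq_0)
  have nz': "(1 + of_nat (Poly_Mapping.lookup h i) :: 'a) \<noteq> 0" using nz by simp
  show ?thesis unfolding Ymul_row by (rule ext) (simp add: nz')
qed

lemma greedy_step:
  fixes B :: "('n::finite \<Rightarrow>\<^sub>0 nat) set"
  defines "E \<equiv> {e. (row B e :: _ \<Rightarrow> 'a::field_char_0) \<notin> vs.span (row B ` {h. mo h < mo e})}"
  assumes "e \<notin> E"
  shows "e + Poly_Mapping.single i 1 \<notin> E"
proof -
  let ?e' = "e + Poly_Mapping.single i 1"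
  let ?R' = "(row B ` {h. mo h < mo ?e'}) :: (_ \<Rightarrow> 'a) set"
  have ee': "mo e < mo ?e'" by (rule mo_less_step)
  have re: "(row B e :: _ \<Rightarrow> 'a) \<in> vs.span (row B ` {h. mo h < mo e})" using assms by (simp add: E_def)
  have Y: "Ymul i x \<in> vs.span ?R'" if "(x :: _ \<Rightarrow> 'a) \<in> vs.span (row B ` {h. mo h < mo e})" for x
  proof -
    have base: "Ymul i x \<in> vs.span ?R'" if "x \<in> row B ` {h. mo h < mo e}" for x
    proof -
      from that obtain h where h: "mo h < mo e" "x = row B h" by auto
      have "mo (h + Poly_Mapping.single i 1) < mo ?e'" using h(1) by (rule mo_less_add)
      moreover have "mo h < mo ?e'" using h(1) ee' by simp
      ultimately show ?thesis unfolding h(2) Ymul_row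
        by (intro vs.span_add vs.span_scale vs.span_base) auto
    qed
    have sub: "vs.subspace {x. Ymul i x \<in> vs.span ?R'}" unfolding vs.subspace_def
    proof (intro conjI ballI allI)
      have "Ymul i (0 :: _ \<Rightarrow> 'a) = 0" by (simp add: Ymul_def fun_eq_iff)
      then show "0 \<in> {x. Ymul i x \<in> vs.span ?R'}" by (simp add: vs.span_zero)
    next
      fix x y assume "x \<in> {x. Ymul i x \<in> vs.span ?R'}" "y \<in> {x. Ymul i x \<in> vs.span ?R'}"
      moreover have "Ymul i (x + y) = Ymul i x + Ymul i y" by (simp add: Ymul_def fun_eq_iff algebra_simps)
      ultimately show "x + y \<in> {x. Ymul i x \<in> vs.span ?R'}" by (simp add: vs.span_add)
    next
      fix c x assume "x \<in> {x. Ymul i x \<in> vs.span ?R'}"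
      moreover have "Ymul i (vscale c x) = vscale c (Ymul i x)" by (simp add: Ymul_def fun_eq_iff algebra_simps)
      ultimately show "vscale c x \<in> {x. Ymul i x \<in> vs.span ?R'}" by (simp add: vs.span_scale)
    qed
    show ?thesis using vs.span_induct[OF that sub] base by blast
  qed
  have "(row B e :: _ \<Rightarrow> 'a) \<in> vs.span ?R'" using ee' by (intro vs.span_base) auto
  then have "(row B ?e' :: _ \<Rightarrow> 'a) \<in> vs.span ?R'"
    unfolding row_step using Y[OF re] by (intro vs.span_scale vs.span_diff) auto
  then show ?thesis by (simp add: E_def)
qed

lemma submonomial_refl: "submonomial e e" by (simp add: submonomial_def)
lemma submonomial_trans: "submonomial a b \<Longrightarrow> submonomial b c \<Longrightarrow> submonomial a c"
  unfolding submonomial_def using order_trans by blast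
lemma submonomial_antisym: "submonomial a b \<Longrightarrow> submonomial b a \<Longrightarrow> a = b"
  unfolding submonomial_def by (intro poly_mapping_eqI) (simp add: order_antisym)

lemma cone_from_step:
  fixes E :: "('n::finite \<Rightarrow>\<^sub>0 nat) set"
  assumes step: "\<And>e i. e \<notin> E \<Longrightarrow> e + Poly_Mapping.single i 1 \<notin> E"
  shows "cone_closed E"
proof -
  have main: "e \<in> E" if "m \<in> E" "submonomial e m" for m e
    using that
  proof (induction "\<Sum>i\<in>UNIV. Poly_Mapping.lookup m i - Poly_Mapping.lookup e i" arbitrary: e rule: less_induct)
    case less
    show ?case
    proof (cases "e = m")
      case True then show ?thesis using less by simp
    next
      case False
      then obtain i where i: "Poly_Mapping.lookup e i \<noteq> Poly_Mapping.lookup m i"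
        by (meson poly_mapping_eqI)
      with less(3) have ilt: "Poly_Mapping.lookup e i < Poly_Mapping.lookup m i"
        by (simp add: submonomial_def le_neq_trans)
      let ?e' = "e + Poly_Mapping.single i 1"
      have le': "submonomial ?e' m" using less(3) ilt
        by (auto simp: submonomial_def lookup_add lookup_single when_def)
      have "(\<Sum>j\<in>UNIV. Poly_Mapping.lookup m j - Poly_Mapping.lookup ?e' j)
          < (\<Sum>j\<in>UNIV. Poly_Mapping.lookup m j - Poly_Mapping.lookup e j)"
      proof (rule sum_strict_mono_ex1)
        show "\<forall>j\<in>UNIV. Poly_Mapping.lookup m j - Poly_Mapping.lookup ?e' j \<le> Poly_Mapping.lookup m j - Poly_Mapping.lookup e j"
          by (simp add: lookup_add diff_le_mono2)
        show "\<exists>j\<in>UNIV. Poly_Mapping.lookup m j - Poly_Mapping.lookup ?e' j < Poly_Mapping.lookup m j - Poly_Mapping.lookup e j"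
          using ilt by (intro bexI[of _ i]) (auto simp: lookup_add lookup_single)
      qed simp
      then have "?e' \<in> E" using less(1)[OF _ less(2) le'] by blast
      then show ?thesis using step by blast
    qed
  qed
  show ?thesis unfolding cone_closed_def using main by blast
qed

definition delt :: "'x \<Rightarrow> 'x \<Rightarrow> 'a::field" where
  "delt b = (\<lambda>x. if x = b then 1 else 0)"

lemma sum_delt_left:
  fixes f :: "_ \<Rightarrow> 'a::field"
  shows "finite B \<Longrightarrow> (\<Sum>b\<in>B. f b * delt b x) = (if x \<in> B then f x else 0)"
proof -
  assume fin: "finite B"
  have "(\<Sum>b\<in>B. f b * delt b x) = (\<Sum>b\<in>B. if x = b then f b else 0)"
    by (rule sum.cong) (auto simp: delt_def)
  then show ?thesis using fin by simp
qed

lemma sum_vscale_delt: "finite A \<Longrightarrow> (\<Sum>b'\<in>A. vscale (g b') (delt b')) x = (if x \<in> A then g x else (0::'a::field))"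
  unfolding sum_vscale_apply by (rule sum_delt_left)

lemma row_in_delt_span:
  fixes B :: "('n::finite \<Rightarrow>\<^sub>0 nat) set"
  assumes "finite B"
  shows "(row B e :: _ \<Rightarrow> 'a::field_char_0) \<in> vs.span (delt ` B)"
proof -
  have "(row B e :: _ \<Rightarrow> 'a) = (\<Sum>b\<in>B. vscale (row B e b) (delt b))"
  proof
    fix x
    show "row B e x = (\<Sum>b\<in>B. vscale (row B e b) (delt b)) x"
      unfolding sum_vscale_apply sum_delt_left[OF assms] by (simp add: row_def)
  qed
  also have "\<dots> \<in> vs.span (delt ` B)"
    by (intro vs.span_sum vs.span_scale vs.span_base) auto
  finally show ?thesis .
qed

lemma delt_indep:
  assumes "finite B"
  shows "inj_on (delt :: _ \<Rightarrow> _ \<Rightarrow> 'a::field) B \<and> \<not> vs.dependent ((delt :: _ \<Rightarrow> _ \<Rightarrow> 'a) ` B)"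
proof (rule famindep_I[OF assms])
  fix u :: "_ \<Rightarrow> 'a" assume H: "\<And>j. (\<Sum>a\<in>B. u a * delt a j) = 0"
  show "\<forall>a\<in>B. u a = 0"
  proof
    fix a assume "a \<in> B"
    have "(\<Sum>x\<in>B. u x * delt x a) = u a" using \<open>a \<in> B\<close> by (simp add: sum_delt_left[OF assms])
    then show "u a = 0" using H[of a] by simp
  qed
qed

lemma row_delt_decomp:
  fixes B :: "('n::finite \<Rightarrow>\<^sub>0 nat) set"
  assumes fin: "finite B" and b: "b \<in> B"
  shows "(row B b :: _ \<Rightarrow> 'a::field_char_0) = delt b + (\<Sum>b'\<in>{b'\<in>B. submonomial b b' \<and> b' \<noteq> b}. vscale (of_nat (bin b' b)) (delt b'))"
proof (rule ext)
  fix x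
  have finA: "finite {b'\<in>B. submonomial b b' \<and> b' \<noteq> b}" using fin by simp
  show "row B b x = (delt b + (\<Sum>b'\<in>{b'\<in>B. submonomial b b' \<and> b' \<noteq> b}. vscale (of_nat (bin b' b)) (delt b'))) x"
    unfolding plus_fun_apply sum_vscale_delt[OF finA] using b bin_nz[of x b]
    by (auto simp: row_def delt_def bin_self)
qed

lemma delt_step:
  fixes B :: "('n::finite \<Rightarrow>\<^sub>0 nat) set"
  assumes fin: "finite B" and b: "b \<in> B"
    and IH: "\<And>b'. b' \<in> B \<Longrightarrow> submonomial b b' \<Longrightarrow> b' \<noteq> b \<Longrightarrow> (delt b' :: _ \<Rightarrow> 'a::field_char_0) \<in> vs.span (range (row B))"
  shows "(delt b :: _ \<Rightarrow> 'a) \<in> vs.span (range (row B))"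
proof -
  have "(delt b :: _ \<Rightarrow> 'a) = row B b - (\<Sum>b'\<in>{b'\<in>B. submonomial b b' \<and> b' \<noteq> b}. vscale (of_nat (bin b' b)) (delt b'))"
    unfolding row_delt_decomp[OF fin b] by simp
  also have "\<dots> \<in> vs.span (range (row B))"
    by (intro vs.span_diff vs.span_sum vs.span_scale) (auto intro: vs.span_base IH)
  finally show ?thesis .
qed

lemma card_A_less:
  fixes B :: "('n::finite \<Rightarrow>\<^sub>0 nat) set"
  assumes fin: "finite B" and that: "b' \<in> B" "submonomial b b'" "b' \<noteq> b"
  shows "card {x\<in>B. submonomial b' x \<and> x \<noteq> b'} < card {x\<in>B. submonomial b x \<and> x \<noteq> b}"
proof (rule psubset_card_mono)
  show "finite {x\<in>B. submonomial b x \<and> x \<noteq> b}" using fin by simp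
  show "{x\<in>B. submonomial b' x \<and> x \<noteq> b'} \<subset> {x\<in>B. submonomial b x \<and> x \<noteq> b}"
  proof
    show "{x\<in>B. submonomial b' x \<and> x \<noteq> b'} \<subseteq> {x\<in>B. submonomial b x \<and> x \<noteq> b}"
      using that by (auto intro: submonomial_trans dest: submonomial_antisym)
    show "{x\<in>B. submonomial b' x \<and> x \<noteq> b'} \<noteq> {x\<in>B. submonomial b x \<and> x \<noteq> b}"
      using that by auto
  qed
qed

lemma delt_in_row_span:
  fixes B :: "('n::finite \<Rightarrow>\<^sub>0 nat) set"
  assumes fin: "finite B" and b: "b \<in> B"
  shows "(delt b :: _ \<Rightarrow> 'a::field_char_0) \<in> vs.span (range (row B))"
proof -
  define A where "A b = {b'\<in>B. submonomial b b' \<and> b' \<noteq> b}" for b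
  show ?thesis using b
  proof (induction "card (A b)" arbitrary: b rule: less_induct)
    case less
    show ?case
      apply (rule delt_step[OF fin less(2)])
      apply (rule less(1))
      using card_A_less[OF fin] less(2) by (auto simp: A_def)
  qed
qed

lemma comb_main:
  fixes B :: "('n::finite \<Rightarrow>\<^sub>0 nat) set"
  assumes fin: "finite B"
  shows "\<exists>E. cone_closed E \<and> finite E \<and> card E = card B \<and>
     (\<forall>a. (\<forall>b\<in>B. (\<Sum>e\<in>E. a e * of_nat (bin b e)) = (0::'a::field_char_0)) \<longrightarrow> (\<forall>e\<in>E. a e = 0))"
proof -
  define E where "E = {e. (row B e :: _ \<Rightarrow> 'a) \<notin> vs.span (row B ` {h. mo h < mo e})}"
  have cone: "cone_closed E"
    unfolding E_def by (rule cone_from_step) (rule greedy_step)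
  have indep: "\<not> vs.dependent ((row B :: _ \<Rightarrow> _ \<Rightarrow> 'a) ` E)"
    unfolding E_def by (rule greedy_indep)
  have inj: "inj_on (row B :: _ \<Rightarrow> _ \<Rightarrow> 'a) E"
    unfolding E_def by (rule greedy_inj)
  have sp1: "(row B :: _ \<Rightarrow> _ \<Rightarrow> 'a) ` E \<subseteq> vs.span ((delt :: _ \<Rightarrow> _ \<Rightarrow> 'a) ` B)"
    using row_in_delt_span[OF fin] by blast
  have fdB: "finite ((delt :: _ \<Rightarrow> _ \<Rightarrow> 'a) ` B)" using fin by simp
  from vs.independent_span_bound[OF fdB indep sp1]
  have fE': "finite ((row B :: _ \<Rightarrow> _ \<Rightarrow> 'a) ` E)" and c1: "card ((row B :: _ \<Rightarrow> _ \<Rightarrow> 'a) ` E) \<le> card ((delt :: _ \<Rightarrow> _ \<Rightarrow> 'a) ` B)"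
    by auto
  have fE: "finite E" using fE' inj finite_image_iff by blast
  have rs: "range (row B :: _ \<Rightarrow> _ \<Rightarrow> 'a) \<subseteq> vs.span ((row B :: _ \<Rightarrow> _ \<Rightarrow> 'a) ` E)"
    unfolding E_def using greedy_span[of "row B"] by blast
  have sp2: "(delt :: _ \<Rightarrow> _ \<Rightarrow> 'a) ` B \<subseteq> vs.span ((row B :: _ \<Rightarrow> _ \<Rightarrow> 'a) ` E)"
  proof -
    have "(delt :: _ \<Rightarrow> _ \<Rightarrow> 'a) ` B \<subseteq> vs.span (range (row B :: _ \<Rightarrow> _ \<Rightarrow> 'a))"
      using delt_in_row_span[OF fin] by blast
    also have "\<dots> \<subseteq> vs.span ((row B :: _ \<Rightarrow> _ \<Rightarrow> 'a) ` E)"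
      using rs by (intro vs.span_minimal vs.subspace_span)
    finally show ?thesis .
  qed
  have dind: "inj_on (delt :: _ \<Rightarrow> _ \<Rightarrow> 'a) B \<and> \<not> vs.dependent ((delt :: _ \<Rightarrow> _ \<Rightarrow> 'a) ` B)"
    by (rule delt_indep[OF fin])
  from vs.independent_span_bound[OF fE' conjunct2[OF dind] sp2]
  have c2: "card ((delt :: _ \<Rightarrow> _ \<Rightarrow> 'a) ` B) \<le> card ((row B :: _ \<Rightarrow> _ \<Rightarrow> 'a) ` E)" by auto
  have cardE: "card E = card B"
    using c1 c2 card_image[OF inj] card_image[OF conjunct1[OF dind]] by simp
  have ind2: "\<forall>e\<in>E. a e = 0" if H: "\<forall>b\<in>B. (\<Sum>e\<in>E. a e * of_nat (bin b e)) = (0::'a)" for a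
  proof -
    have "(\<Sum>e\<in>E. a e * (row B e :: _ \<Rightarrow> 'a) j) = 0" for j
    proof (cases "j \<in> B")
      case True
      then show ?thesis using H by (simp add: row_def)
    next
      case False
      then show ?thesis by (simp add: row_def)
    qed
    then show ?thesis using greedy_indep_fin[of E "row B" a] fE unfolding E_def by blast
  qed
  show ?thesis using cone fE cardE ind2 by blast
qed

lemma lookup_mconst_mult: "Poly_Mapping.lookup (mconst c * q) e = c * Poly_Mapping.lookup q e"
  unfolding mconst_def mult_map_scale_conv_mult[symmetric] by (simp add: map.rep_eq when_def)

lemma weight_diff:
  assumes "submonomial e m"
  shows "(\<Sum>i\<in>UNIV. w i * (Poly_Mapping.lookup m i - Poly_Mapping.lookup e i)) = weight w m - weight w e"
proof -
  have "(\<Sum>i\<in>UNIV. w i * (Poly_Mapping.lookup m i - Poly_Mapping.lookup e i))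
      = (\<Sum>i\<in>UNIV. Poly_Mapping.lookup m i * w i - Poly_Mapping.lookup e i * w i)"
    by (intro sum.cong refl) (simp add: diff_mult_distrib2 mult.commute)
  also have "\<dots> = weight w m - weight w e"
    unfolding weight_def using assms by (intro sum_subtractf_nat) (simp add: submonomial_def)
  finally show ?thesis .
qed

lemma submonomial_weight: "submonomial e m \<Longrightarrow> weight w e \<le> weight w m"
  unfolding weight_def submonomial_def by (intro sum_mono mult_right_mono) auto

lemma lookup_shift_scalar:
  fixes p :: "('n::finite, 'a::field) mpoly"
  shows "Poly_Mapping.lookup (shift_scalar w p) e =
    (\<Sum>m\<in>Poly_Mapping.keys p. emb (Poly_Mapping.lookup p m) * (of_nat (bin m e) * t_var ^ (weight w m - weight w e)))"
proof -
  have key: "Poly_Mapping.lookup (\<Prod>i\<in>UNIV. (mvar i + mconst (t_var ^ w i)) ^ Poly_Mapping.lookup m i) e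
      = (of_nat (bin m e) * t_var ^ (weight w m - weight w e) :: 'a poly fract)" for m
  proof -
    have "Poly_Mapping.lookup (\<Prod>i\<in>UNIV. (mvar i + mconst (t_var ^ w i)) ^ Poly_Mapping.lookup m i) e
       = (\<Prod>i\<in>UNIV. of_nat (Poly_Mapping.lookup m i choose Poly_Mapping.lookup e i) * (t_var ^ w i) ^ (Poly_Mapping.lookup m i - Poly_Mapping.lookup e i))"
      by (rule lookup_prod_shift)
    also have "\<dots> = of_nat (bin m e) * (t_var :: 'a poly fract) ^ (\<Sum>i\<in>UNIV. w i * (Poly_Mapping.lookup m i - Poly_Mapping.lookup e i))"
      by (simp add: prod.distrib bin_def power_sum power_mult)
    also have "\<dots> = of_nat (bin m e) * t_var ^ (weight w m - weight w e)"
    proof (cases "bin m e = 0")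
      case False
      then have "submonomial e m" using bin_nz by blast
      then show ?thesis by (simp add: weight_diff)
    qed simp
    finally show ?thesis .
  qed
  show ?thesis
    unfolding shift_scalar_def lookup_sum lookup_mconst_mult key ..
qed

definition pf :: "'a::field poly \<Rightarrow> 'a poly fract" where "pf p = Fract p 1"

lemma pf_add: "pf (p + q) = pf p + pf q" by (simp add: pf_def)
lemma pf_mult: "pf (p * q) = pf p * pf q" by (simp add: pf_def)
lemma pf_0: "pf 0 = 0" by (simp add: pf_def Zero_fract_def)
lemma pf_1: "pf 1 = 1" by (simp add: pf_def One_fract_def)
lemma pf_eq_iff: "pf p = pf q \<longleftrightarrow> p = q" by (simp add: pf_def eq_fract)
lemma pf_eq_0_iff: "pf p = 0 \<longleftrightarrow> p = 0" using pf_eq_iff[of p 0] by (simp add: pf_0)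
lemma pf_sum: "pf (\<Sum>x\<in>A. g x) = (\<Sum>x\<in>A. pf (g x))"
  by (induction A rule: infinite_finite_induct) (simp_all add: pf_0 pf_add)
lemma pf_power: "pf (p ^ n) = pf p ^ n"
  by (induction n) (simp_all add: pf_1 pf_mult)

lemma emb_pf: "emb c = pf [:c:]" by (simp add: emb_def pf_def)
lemma t_var_pf: "t_var = pf [:0, 1:]" by (simp add: t_var_def pf_def)
lemma emb_add: "emb (a + b) = emb a + emb b" by (simp add: emb_pf pf_add[symmetric])
lemma emb_mult: "emb (a * b) = emb a * emb b" by (simp add: emb_pf pf_mult[symmetric] mult.commute)
lemma emb_0: "emb 0 = 0" by (simp add: emb_pf pf_0)
lemma emb_1: "emb 1 = 1" by (simp add: emb_pf pf_1[symmetric] one_pCons)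
lemma emb_sum: "emb (\<Sum>x\<in>A. g x) = (\<Sum>x\<in>A. emb (g x))"
  by (induction A rule: infinite_finite_induct) (simp_all add: emb_0 emb_add)
lemma emb_of_nat: "emb (of_nat n) = of_nat n"
  by (induction n) (simp_all add: emb_0 emb_add emb_1)
lemma t_var_nz: "t_var \<noteq> 0" by (simp add: t_var_pf pf_eq_0_iff)

lemma clear_denoms:
  fixes \<mu> :: "'x \<Rightarrow> 'a::field poly fract"
  assumes "finite E"
  shows "\<exists>D. D \<noteq> 0 \<and> (\<forall>e\<in>E. \<exists>p. pf D * \<mu> e = pf p)"
  using assms
proof (induction E rule: finite_induct)
  case empty
  show ?case by (intro exI[of _ 1]) simp
next
  case (insert x E)
  then obtain D where D: "D \<noteq> 0" "\<forall>e\<in>E. \<exists>p. pf D * \<mu> e = pf p" by blast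
  obtain a b where ab: "\<mu> x = Fract a b" "b \<noteq> 0" by (cases "\<mu> x") auto
  have "pf (D * b) * \<mu> e = pf (b * p)" if "pf D * \<mu> e = pf p" for e p
    using that by (simp add: pf_mult mult.assoc mult.commute mult.left_commute)
  moreover have "pf (D * b) * \<mu> x = pf (D * a)"
    using ab by (simp add: pf_def eq_fract)
  ultimately have "\<forall>e\<in>insert x E. \<exists>p. pf (D * b) * \<mu> e = pf p" using D(2) by blast
  moreover have "D * b \<noteq> 0" using D(1) ab(2) by simp
  ultimately show ?case by blast
qed

lemma span_eq_by_card:
  fixes S C :: "('c \<Rightarrow> 'b::field) set"
  assumes fS: "finite S" and iS: "\<not> vs.dependent S" and iC: "\<not> vs.dependent C"
    and sub: "C \<subseteq> vs.span S" and card: "card C = card S"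
  shows "vs.span C = vs.span S"
proof
  show "vs.span C \<subseteq> vs.span S" using sub by (intro vs.span_minimal vs.subspace_span)
  have fC: "finite C" using vs.independent_span_bound[OF fS iC sub] by simp
  have "S \<subseteq> vs.span C"
  proof (rule ccontr)
    assume "\<not> S \<subseteq> vs.span C"
    then obtain x where x: "x \<in> S" "x \<notin> vs.span C" by blast
    have i2: "\<not> vs.dependent (insert x C)" using vs.independent_insertI[OF x(2) iC] .
    have s2: "insert x C \<subseteq> vs.span S" using sub x(1) vs.span_base by blast
    have "card (insert x C) \<le> card S" using vs.independent_span_bound[OF fS i2 s2] by simp
    moreover have "x \<notin> C" using x(2) vs.span_base by blast
    ultimately show False using fC card by simp
  qed
  then show "vs.span S \<subseteq> vs.span C" by (intro vs.span_minimal vs.subspace_span)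
qed

lemma shift_indep_core:
  fixes Q :: "'x \<Rightarrow> 'y \<Rightarrow> 'a::field poly" and M :: "'y \<Rightarrow> 'x \<Rightarrow> nat"
  assumes fE: "finite E"
    and rowind: "\<And>a. (\<forall>b\<in>B. (\<Sum>e\<in>E. a e * of_nat (M b e)) = (0::'a)) \<Longrightarrow> (\<forall>e\<in>E. a e = 0)"
    and q0: "\<And>e b. e \<in> E \<Longrightarrow> b \<in> B \<Longrightarrow> coeff (Q e b) 0 = of_nat (M b e)"
    and H: "\<And>b. b \<in> B \<Longrightarrow> (\<Sum>e\<in>E. \<mu> e * pf (Q e b)) = 0"
  shows "\<forall>e\<in>E. \<mu> e = 0"
proof -
  obtain D where D: "D \<noteq> 0" "\<forall>e\<in>E. \<exists>p. pf D * \<mu> e = pf p"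
    using clear_denoms[OF fE, of \<mu>] by blast
  from bchoice[OF D(2)] obtain p where p: "\<forall>e\<in>E. pf D * \<mu> e = pf (p e)" by blast
  have zero: "(\<Sum>e\<in>E. p e * Q e b) = 0" if b: "b \<in> B" for b
  proof -
    have "pf (\<Sum>e\<in>E. p e * Q e b) = (\<Sum>e\<in>E. pf D * \<mu> e * pf (Q e b))"
      unfolding pf_sum pf_mult using p by (intro sum.cong refl) auto
    also have "\<dots> = pf D * (\<Sum>e\<in>E. \<mu> e * pf (Q e b))"
      by (simp add: sum_distrib_left mult.assoc)
    also have "\<dots> = 0" using H[OF b] by simp
    finally show ?thesis by (simp add: pf_eq_0_iff)
  qed
  have pz: "\<forall>e\<in>E. p e = 0"
  proof (rule ccontr)
    assume "\<not> (\<forall>e\<in>E. p e = 0)"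
    then obtain e0 where e0': "e0 \<in> E" "p e0 \<noteq> 0" by blast
    then have e0: "e0 \<in> E" "coeff (p e0) (degree (p e0)) \<noteq> 0" by simp_all
    define v0 where "v0 = (LEAST v. \<exists>e\<in>E. coeff (p e) v \<noteq> 0)"
    have ex: "\<exists>v. \<exists>e\<in>E. coeff (p e) v \<noteq> 0" using e0 by blast
    have v0: "\<exists>e\<in>E. coeff (p e) v0 \<noteq> 0" unfolding v0_def using ex by (rule LeastI_ex)
    have low: "coeff (p e) i = 0" if "e \<in> E" "i < v0" for e i
    proof -
      have "\<not> (\<exists>e\<in>E. coeff (p e) i \<noteq> 0)" using that(2) unfolding v0_def by (rule not_less_Least)
      then show ?thesis using that(1) by simp
    qed
    have "(\<Sum>e\<in>E. coeff (p e) v0 * of_nat (M b e)) = 0" if b: "b \<in> B" for b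
    proof -
      have "(\<Sum>e\<in>E. coeff (p e) v0 * of_nat (M b e)) = (\<Sum>e\<in>E. coeff (p e * Q e b) v0)"
      proof (intro sum.cong refl)
        fix e assume e: "e \<in> E"
        have "coeff (p e * Q e b) v0 = (\<Sum>i\<le>v0. coeff (p e) i * coeff (Q e b) (v0 - i))"
          by (rule coeff_mult)
        also have "\<dots> = coeff (p e) v0 * coeff (Q e b) 0 + (\<Sum>i<v0. coeff (p e) i * coeff (Q e b) (v0 - i))"
        proof -
          have "{..v0} = insert v0 {..<v0}" by auto
          then show ?thesis by simp
        qed
        also have "(\<Sum>i<v0. coeff (p e) i * coeff (Q e b) (v0 - i)) = 0"
          using low[OF e] by (intro sum.neutral) auto
        finally show "coeff (p e) v0 * of_nat (M b e) = coeff (p e * Q e b) v0"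
          using q0[OF e b] by simp
      qed
      also have "\<dots> = coeff (\<Sum>e\<in>E. p e * Q e b) v0" by (simp add: coeff_sum)
      also have "\<dots> = 0" using zero[OF b] by simp
      finally show ?thesis .
    qed
    then have "\<forall>e\<in>E. coeff (p e) v0 = 0" using rowind[of "\<lambda>e. coeff (p e) v0"] by blast
    with v0 show False by blast
  qed
  have "pf D \<noteq> 0" using D(1) by (simp add: pf_eq_0_iff)
  then show ?thesis using p pz by (simp add: pf_0)
qed

lemma emb_indep:
  fixes c :: "'y \<Rightarrow> 'k \<Rightarrow> 'a::field"
  assumes fB: "finite B"
    and cind: "\<And>u. (\<forall>j. (\<Sum>b\<in>B. u b * c b j) = 0) \<Longrightarrow> (\<forall>b\<in>B. u b = 0)"
    and H: "\<And>j. (\<Sum>b\<in>B. lam b * emb (c b j)) = 0"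
  shows "\<forall>b\<in>B. lam b = 0"
proof -
  obtain D where D: "D \<noteq> 0" "\<forall>b\<in>B. \<exists>p. pf D * lam b = pf p"
    using clear_denoms[OF fB, of lam] by blast
  from bchoice[OF D(2)] obtain p where p: "\<forall>b\<in>B. pf D * lam b = pf (p b)" by blast
  have zero: "(\<Sum>b\<in>B. p b * [:c b j:]) = 0" for j
  proof -
    have "pf (\<Sum>b\<in>B. p b * [:c b j:]) = (\<Sum>b\<in>B. pf D * lam b * emb (c b j))"
      unfolding pf_sum pf_mult emb_pf using p by (intro sum.cong refl) auto
    also have "\<dots> = pf D * (\<Sum>b\<in>B. lam b * emb (c b j))"
      by (simp add: sum_distrib_left mult.assoc)
    also have "\<dots> = 0" using H[of j] by simp
    finally show ?thesis by (simp add: pf_eq_0_iff)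
  qed
  have "coeff (p b) i = 0" if b: "b \<in> B" for b i
  proof -
    have "\<forall>j. (\<Sum>b\<in>B. coeff (p b) i * c b j) = 0"
    proof
      fix j
      have "(\<Sum>b\<in>B. coeff (p b) i * c b j) = coeff (\<Sum>b\<in>B. p b * [:c b j:]) i"
        by (simp add: coeff_sum mult.commute)
      then show "(\<Sum>b\<in>B. coeff (p b) i * c b j) = 0" using zero[of j] by simp
    qed
    then show ?thesis using cind[of "\<lambda>b. coeff (p b) i"] b by blast
  qed
  then have pz: "\<forall>b\<in>B. p b = 0" by (auto intro: poly_eqI)
  have "pf D \<noteq> 0" using D(1) by (simp add: pf_eq_0_iff)
  then show ?thesis using p pz by (simp add: pf_0)
qed

theorem theorem5:
  fixes f :: "('k::finite, 'n::finite, 'a::field_char_0) vpoly"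
    and w :: "'n \<Rightarrow> nat"
  assumes "basis_isolating w f"
  shows "has_cone_closed_basis (shift_poly w f)"
proof -
  obtain B where cb: "coef_basis f B" and injw: "inj_on (weight w) B"
    and iso: "\<forall>m \<in> vsupp f - B. coefv f m \<in> vs.span (coefv f ` {m'\<in>B. weight w m' < weight w m})"
    using assms unfolding basis_isolating_def by blast
  define c where "c = coefv f"
  have injc: "inj_on c B" and indc: "\<not> vs.dependent (c ` B)" and spc: "vs.span (c ` B) = lrsp f"
    using cb unfolding coef_basis_def c_def by auto
  define V where "V = vsupp f"
  have finV: "finite V"
  proof -
    have "V \<subseteq> (\<Union>j. Poly_Mapping.keys (f j))"
      by (auto simp: V_def vsupp_def coefv_def fun_eq_iff in_keys_iff)
    then show ?thesis by (rule finite_subset) simp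
  qed
  have BV: "B \<subseteq> V"
  proof
    fix b assume b: "b \<in> B"
    have "c b \<noteq> 0"
    proof
      assume "c b = 0"
      then have "0 \<in> c ` B" using b by (metis image_eqI)
      then show False using indc vs.dependent_zero by blast
    qed
    then show "b \<in> V" by (simp add: V_def vsupp_def c_def zero_fun_def)
  qed
  have finB: "finite B" using finV BV finite_subset by blast
  have cind: "\<forall>b\<in>B. u b = 0" if "\<forall>j. (\<Sum>b\<in>B. u b * c b j) = 0" for u
    using famindep_D[OF finB injc indc] that by blast
  have "\<forall>m\<in>V. \<exists>\<alpha>. (\<forall>j. c m j = (\<Sum>b\<in>B. \<alpha> b * c b j)) \<and>
      (\<forall>b\<in>B. \<alpha> b \<noteq> 0 \<longrightarrow> b = m \<or> weight w b < weight w m) \<and> (m \<in> B \<longrightarrow> \<alpha> m = 1)"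
  proof
    fix m assume m: "m \<in> V"
    show "\<exists>\<alpha>. (\<forall>j. c m j = (\<Sum>b\<in>B. \<alpha> b * c b j)) \<and>
      (\<forall>b\<in>B. \<alpha> b \<noteq> 0 \<longrightarrow> b = m \<or> weight w b < weight w m) \<and> (m \<in> B \<longrightarrow> \<alpha> m = 1)"
    proof (cases "m \<in> B")
      case True
      have "c m j = (\<Sum>b\<in>B. (if b = m then 1 else 0) * c b j)" for j
        using True finB by (simp add: if_distrib[of "\<lambda>x. x * _"] cong: if_cong)
      then show ?thesis by (intro exI[of _ "\<lambda>b. if b = m then 1 else 0"]) auto
    next
      case False
      define Bm where "Bm = {m'\<in>B. weight w m' < weight w m}"
      have BmB: "Bm \<subseteq> B" by (auto simp: Bm_def)
      have injm: "inj_on c Bm" using injc BmB by (rule inj_on_subset)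
      have finBm: "finite Bm" using finite_subset[OF BmB finB] .
      have "c m \<in> vs.span (c ` Bm)" using iso m False by (simp add: V_def Bm_def c_def)
      then obtain u where u: "c m = (\<Sum>v\<in>c ` Bm. vscale (u v) v)"
        using vs.span_finite[of "c ` Bm"] finBm by auto
      define \<beta> where "\<beta> b = (if b \<in> Bm then u (c b) else 0)" for b
      have "c m j = (\<Sum>b\<in>B. \<beta> b * c b j)" for j
      proof -
        have "c m j = (\<Sum>b\<in>Bm. u (c b) * c b j)"
          unfolding u sum.reindex[OF injm] by (simp add: sum_vscale_apply)
        also have "\<dots> = (\<Sum>b\<in>B. \<beta> b * c b j)"
          unfolding \<beta>_def using finBm finB BmB
          by (intro sum.mono_neutral_cong_left) auto
        finally show ?thesis .
      qed
      moreover have "\<forall>b\<in>B. \<beta> b \<noteq> 0 \<longrightarrow> b = m \<or> weight w b < weight w m"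
        by (auto simp: \<beta>_def Bm_def)
      ultimately show ?thesis using False by (intro exI[of _ \<beta>]) blast
    qed
  qed
  from bchoice[OF this] obtain \<alpha> where \<alpha>: "\<forall>m\<in>V. (\<forall>j. c m j = (\<Sum>b\<in>B. \<alpha> m b * c b j)) \<and>
      (\<forall>b\<in>B. \<alpha> m b \<noteq> 0 \<longrightarrow> b = m \<or> weight w b < weight w m) \<and> (m \<in> B \<longrightarrow> \<alpha> m m = 1)"
    ..
  define c' where "c' = coefv (shift_poly w f)"
  define T where "T m e = (of_nat (bin m e) * t_var ^ (weight w m - weight w e) :: 'a poly fract)" for m e
  have S1: "c' e j = (\<Sum>m\<in>V. emb (c m j) * T m e)" for e j
  proof -
    have "c' e j = (\<Sum>m\<in>Poly_Mapping.keys (f j). emb (Poly_Mapping.lookup (f j) m) * T m e)"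
      by (simp add: c'_def coefv_def shift_poly_def lookup_shift_scalar T_def)
    also have "\<dots> = (\<Sum>m\<in>V. emb (Poly_Mapping.lookup (f j) m) * T m e)"
    proof (rule sum.mono_neutral_left[OF finV])
      show "Poly_Mapping.keys (f j) \<subseteq> V"
        by (auto simp: V_def vsupp_def coefv_def fun_eq_iff in_keys_iff)
      show "\<forall>m\<in>V - Poly_Mapping.keys (f j). emb (Poly_Mapping.lookup (f j) m) * T m e = 0"
        by (auto simp: in_keys_iff emb_0)
    qed
    finally show ?thesis by (simp add: c_def coefv_def)
  qed
  define Pm where "Pm e b = (\<Sum>m\<in>V. emb (\<alpha> m b) * T m e)" for e b
  have S2: "c' e j = (\<Sum>b\<in>B. Pm e b * emb (c b j))" for e j
  proof -
    have "c' e j = (\<Sum>m\<in>V. (\<Sum>b\<in>B. emb (\<alpha> m b) * emb (c b j)) * T m e)"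
      unfolding S1
    proof (rule sum.cong[OF refl])
      fix m assume m: "m \<in> V"
      have "emb (c m j) = emb (\<Sum>b\<in>B. \<alpha> m b * c b j)" using \<alpha> m by simp
      also have "\<dots> = (\<Sum>b\<in>B. emb (\<alpha> m b) * emb (c b j))" by (simp add: emb_sum emb_mult)
      finally show "emb (c m j) * T m e = (\<Sum>b\<in>B. emb (\<alpha> m b) * emb (c b j)) * T m e" by simp
    qed
    also have "\<dots> = (\<Sum>m\<in>V. \<Sum>b\<in>B. emb (\<alpha> m b) * T m e * emb (c b j))"
      by (intro sum.cong refl) (simp add: sum_distrib_right sum_distrib_left mult_ac)
    also have "\<dots> = (\<Sum>b\<in>B. \<Sum>m\<in>V. emb (\<alpha> m b) * T m e * emb (c b j))"
      by (rule sum.swap)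
    also have "\<dots> = (\<Sum>b\<in>B. Pm e b * emb (c b j))"
      by (simp add: Pm_def sum_distrib_right)
    finally show ?thesis .
  qed
  define q where "q e b = (\<Sum>m\<in>V. [:\<alpha> m b * of_nat (bin m e):] * [:0, 1:] ^ (weight w m - weight w b))" for e b
  have S4: "t_var ^ weight w e * Pm e b = t_var ^ weight w b * pf (q e b)" if b: "b \<in> B" for e b
  proof -
    have pq: "pf (q e b) = (\<Sum>m\<in>V. emb (\<alpha> m b) * of_nat (bin m e) * t_var ^ (weight w m - weight w b))"
      unfolding q_def pf_sum pf_mult pf_power t_var_pf[symmetric] emb_pf[symmetric]
      by (simp add: emb_mult emb_of_nat)
    have "t_var ^ weight w e * Pm e b = (\<Sum>m\<in>V. t_var ^ weight w e * (emb (\<alpha> m b) * T m e))"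
      by (simp add: Pm_def sum_distrib_left)
    also have "\<dots> = (\<Sum>m\<in>V. t_var ^ weight w b * (emb (\<alpha> m b) * of_nat (bin m e) * t_var ^ (weight w m - weight w b)))"
    proof (rule sum.cong[OF refl])
      fix m assume m: "m \<in> V"
      show "t_var ^ weight w e * (emb (\<alpha> m b) * T m e) =
          t_var ^ weight w b * (emb (\<alpha> m b) * of_nat (bin m e) * t_var ^ (weight w m - weight w b))"
      proof (cases "\<alpha> m b = 0 \<or> bin m e = 0")
        case True then show ?thesis by (auto simp: T_def emb_0)
      next
        case False
        then have "submonomial e m" using bin_nz by blast
        then have le1: "weight w e \<le> weight w m" by (rule submonomial_weight)
        have "b = m \<or> weight w b < weight w m" using \<alpha> m b False by blast
        then have le2: "weight w b \<le> weight w m" by auto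
        have p1: "(t_var :: 'a poly fract) ^ weight w e * t_var ^ (weight w m - weight w e) = t_var ^ weight w m"
          using le1 by (simp add: power_add[symmetric])
        have p2: "(t_var :: 'a poly fract) ^ weight w b * t_var ^ (weight w m - weight w b) = t_var ^ weight w m"
          using le2 by (simp add: power_add[symmetric])
        show ?thesis unfolding T_def
          by (metis (no_types, lifting) p1 p2 mult.assoc mult.left_commute)
      qed
    qed
    also have "\<dots> = t_var ^ weight w b * pf (q e b)"
      unfolding pq by (simp add: sum_distrib_left)
    finally show ?thesis .
  qed
  have S4': "coeff (q e b) 0 = of_nat (bin b e)" if b: "b \<in> B" for e b
  proof -
    have "coeff (q e b) 0 = (\<Sum>m\<in>V. \<alpha> m b * of_nat (bin m e) * 0 ^ (weight w m - weight w b))"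
      by (simp add: q_def coeff_sum coeff_mult_0 coeff_0_power)
    also have "\<dots> = (\<Sum>m\<in>V. if m = b then of_nat (bin b e) else 0)"
    proof (rule sum.cong[OF refl])
      fix m assume m: "m \<in> V"
      show "\<alpha> m b * of_nat (bin m e) * 0 ^ (weight w m - weight w b) = (if m = b then of_nat (bin b e) else 0)"
      proof (cases "m = b")
        case True then show ?thesis using \<alpha> b BV by auto
      next
        case False
        show ?thesis
        proof (cases "\<alpha> m b = 0")
          case False': False
          then have "weight w b < weight w m" using \<alpha> m b False by blast
          then show ?thesis using False by simp
        qed (simp add: False)
      qed
    qed
    also have "\<dots> = of_nat (bin b e)" using b BV finV by auto
    finally show ?thesis .
  qed
  obtain E where cone: "cone_closed E" and finE: "finite E" and cardE: "card E = card B"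
    and rowind: "\<forall>a. (\<forall>b\<in>B. (\<Sum>e\<in>E. a e * of_nat (bin b e)) = (0::'a)) \<longrightarrow> (\<forall>e\<in>E. a e = 0)"
    using comb_main[OF finB] by blast
  have S5: "\<forall>e\<in>E. lam e = 0" if H: "\<forall>j. (\<Sum>e\<in>E. lam e * c' e j) = 0" for lam
  proof -
    have H2: "(\<Sum>b\<in>B. (\<Sum>e\<in>E. lam e * Pm e b) * emb (c b j)) = 0" for j
    proof -
      have "(\<Sum>b\<in>B. (\<Sum>e\<in>E. lam e * Pm e b) * emb (c b j)) = (\<Sum>b\<in>B. \<Sum>e\<in>E. lam e * Pm e b * emb (c b j))"
        by (simp add: sum_distrib_right)
      also have "\<dots> = (\<Sum>e\<in>E. \<Sum>b\<in>B. lam e * Pm e b * emb (c b j))" by (rule sum.swap)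
      also have "\<dots> = (\<Sum>e\<in>E. lam e * c' e j)" unfolding S2 by (simp add: sum_distrib_left mult.assoc)
      finally show ?thesis using H by simp
    qed
    have Z: "\<forall>b\<in>B. (\<Sum>e\<in>E. lam e * Pm e b) = 0"
      by (rule emb_indep[OF finB, where c = c]) (use cind H2 in blast)+
    define \<mu> where "\<mu> e = lam e / t_var ^ weight w e" for e
    have lam: "lam e = \<mu> e * t_var ^ weight w e" for e
      by (simp add: \<mu>_def t_var_nz)
    have Hq: "(\<Sum>e\<in>E. \<mu> e * pf (q e b)) = 0" if b: "b \<in> B" for b
    proof -
      have "t_var ^ weight w b * (\<Sum>e\<in>E. \<mu> e * pf (q e b)) = (\<Sum>e\<in>E. \<mu> e * (t_var ^ weight w b * pf (q e b)))"
        by (simp add: sum_distrib_left mult_ac)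
      also have "\<dots> = (\<Sum>e\<in>E. lam e * Pm e b)"
        unfolding S4[OF b, symmetric] lam by (simp add: mult_ac)
      also have "\<dots> = 0" using Z b by blast
      finally show ?thesis by (simp add: t_var_nz)
    qed
    have "\<forall>e\<in>E. \<mu> e = 0"
      by (rule shift_indep_core[where Q = q and M = bin, OF finE]) (use rowind S4' Hq in auto)
    then show ?thesis by (simp add: lam)
  qed
  have S6: "inj_on c' E \<and> \<not> vs.dependent (c' ` E)"
    apply (rule famindep_I[OF finE])
    apply (rule S5)
    by blast
  define ch where "ch b = (\<lambda>j. emb (c b j))" for b
  have S7: "inj_on ch B \<and> \<not> vs.dependent (ch ` B)"
    apply (rule famindep_I[OF finB])
    unfolding ch_def
    apply (rule emb_indep[OF finB, where c = c])
    using cind by blast+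
  have S8: "c' e \<in> vs.span (ch ` B)" for e
  proof -
    have "c' e = (\<Sum>b\<in>B. vscale (Pm e b) (ch b))"
      by (rule ext) (simp add: sum_vscale_apply S2 ch_def)
    also have "\<dots> \<in> vs.span (ch ` B)"
      by (intro vs.span_sum vs.span_scale vs.span_base) auto
    finally show ?thesis .
  qed
  have S9: "vs.span (c' ` E) = vs.span (ch ` B)"
  proof (rule span_eq_by_card)
    show "finite (ch ` B)" using finB by simp
    show "\<not> vs.dependent (ch ` B)" using S7 by blast
    show "\<not> vs.dependent (c' ` E)" using S6 by blast
    show "c' ` E \<subseteq> vs.span (ch ` B)" using S8 by blast
    show "card (c' ` E) = card (ch ` B)"
      using card_image[of c' E] card_image[of ch B] S6 S7 cardE by simp
  qed
  have S10: "lrsp (shift_poly w f) = vs.span (c' ` E)"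
  proof -
    have "lrsp (shift_poly w f) = vs.span (range c')" by (simp add: lrsp_def c'_def)
    also have "\<dots> = vs.span (c' ` E)"
    proof
      show "vs.span (range c') \<subseteq> vs.span (c' ` E)"
        unfolding S9 using S8 by (intro vs.span_minimal vs.subspace_span) auto
      show "vs.span (c' ` E) \<subseteq> vs.span (range c')" by (intro vs.span_mono) auto
    qed
    finally show ?thesis .
  qed
  have "coef_basis (shift_poly w f) E"
    unfolding coef_basis_def c'_def[symmetric] using S6 S10 by simp
  then show ?thesis
    unfolding has_cone_closed_basis_def using cone by blast
qed

end
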